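(* Let $\Gamma$ be a distance-regular graph with classical parameters $(D,b,\alpha,\beta)$ such that $b\ge2$ and $D\ge3$, which is geometric with respect to a set $\mathcal C$ of Delsarte cliques. Then: for each $j\in\{0,1,\dots,D-1\}$, each $C\in\mathcal C$ and each vertex $x$ at distance $j$ from $C$, the number of vertices of $C$ at distance $j$ from $x$ is $\phi_j=1+\alpha[j]$; and for each $j\in\{1,\dots,D\}$ and vertices $x,y$ at distance $j$, the number of cliques in $\mathcal C$ containing $x$ and at distance $j-1$ from $y$ is $\tau_j=[j]$.
   Context: Distance-regular graph with intersection numbers $b_i,c_i$, valency $k=b_0$. For integer $b\ne1$, $[j]=\frac{b^j-1}{b-1}$. Classical parameters $(D,b,\alpha,\beta)$: diameter $D$, $b_i=([D]-[i])(\beta-\alpha[i])$, $c_i=[i](1+\alpha[i-1])$. A Delsarte clique is a clique with $1+\frac{k}{-\theta_{\min}}$ vertices, $\theta_{\min}$ the smallest adjacency eigenvalue; geometric with respect to $\mathcal C$ means every edge lies in exactly one member of $\mathcal C$. Distance from a vertex to a clique $C$: $\min_{y\in C}d(x,y)$. *)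

theory Defs
  imports Complex_Main
begin

definition simple_graph :: "'a set \<Rightarrow> ('a \<Rightarrow> 'a \<Rightarrow> bool) \<Rightarrow> bool" where
  "simple_graph V E \<longleftrightarrow> finite V \<and> V \<noteq> {} \<and>
     (\<forall>x y. E x y \<longrightarrow> x \<in> V \<and> y \<in> V \<and> E y x \<and> x \<noteq> y)"

fun walk :: "'a set \<Rightarrow> ('a \<Rightarrow> 'a \<Rightarrow> bool) \<Rightarrow> nat \<Rightarrow> 'a \<Rightarrow> 'a \<Rightarrow> bool" where
  "walk V E 0 x y = (x = y)"
| "walk V E (Suc n) x y = (\<exists>z\<in>V. E x z \<and> walk V E n z y)"

definition connected_graph :: "'a set \<Rightarrow> ('a \<Rightarrow> 'a \<Rightarrow> bool) \<Rightarrow> bool" where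
  "connected_graph V E \<longleftrightarrow> (\<forall>x\<in>V. \<forall>y\<in>V. \<exists>n. walk V E n x y)"

definition gdist :: "'a set \<Rightarrow> ('a \<Rightarrow> 'a \<Rightarrow> bool) \<Rightarrow> 'a \<Rightarrow> 'a \<Rightarrow> nat" where
  "gdist V E x y = (LEAST n. walk V E n x y)"

definition diameter :: "'a set \<Rightarrow> ('a \<Rightarrow> 'a \<Rightarrow> bool) \<Rightarrow> nat" where
  "diameter V E = Max {gdist V E x y | x y. x \<in> V \<and> y \<in> V}"

definition set_dist :: "'a set \<Rightarrow> ('a \<Rightarrow> 'a \<Rightarrow> bool) \<Rightarrow> 'a \<Rightarrow> 'a set \<Rightarrow> nat" where
  "set_dist V E x C = Min (gdist V E x ` C)"

definition cnum :: "'a set \<Rightarrow> ('a \<Rightarrow> 'a \<Rightarrow> bool) \<Rightarrow> 'a \<Rightarrow> 'a \<Rightarrow> nat" where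
  "cnum V E x y = card {z \<in> V. E y z \<and> gdist V E x z + 1 = gdist V E x y}"

definition bnum :: "'a set \<Rightarrow> ('a \<Rightarrow> 'a \<Rightarrow> bool) \<Rightarrow> 'a \<Rightarrow> 'a \<Rightarrow> nat" where
  "bnum V E x y = card {z \<in> V. E y z \<and> gdist V E x z = gdist V E x y + 1}"

definition distance_regular :: "'a set \<Rightarrow> ('a \<Rightarrow> 'a \<Rightarrow> bool) \<Rightarrow> bool" where
  "distance_regular V E \<longleftrightarrow> simple_graph V E \<and> connected_graph V E \<and>
     (\<exists>b c :: nat \<Rightarrow> nat. \<forall>x\<in>V. \<forall>y\<in>V.
        bnum V E x y = b (gdist V E x y) \<and> cnum V E x y = c (gdist V E x y))"

text \<open>Valency (degree of a vertex; constant for distance-regular graphs).\<close>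
definition valency :: "'a set \<Rightarrow> ('a \<Rightarrow> 'a \<Rightarrow> bool) \<Rightarrow> nat" where
  "valency V E = card {y \<in> V. E (SOME x. x \<in> V) y}"

definition qbr :: "int \<Rightarrow> nat \<Rightarrow> real" where
  "qbr b j = (real_of_int b ^ j - 1) / (real_of_int b - 1)"

text \<open>Classical parameters (D,b,alpha,beta): b_i = ([D]-[i])(beta - alpha[i]),
  c_i = [i](1 + alpha[i-1]) for 0 <= i <= D (c_0 = 0 since [0] = 0).\<close>
definition classical_parameters ::
  "'a set \<Rightarrow> ('a \<Rightarrow> 'a \<Rightarrow> bool) \<Rightarrow> nat \<Rightarrow> int \<Rightarrow> real \<Rightarrow> real \<Rightarrow> bool" where
  "classical_parameters V E D b \<alpha> \<beta> \<longleftrightarrow> distance_regular V E \<and> b \<noteq> 1 \<and>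
     diameter V E = D \<and>
     (\<forall>x\<in>V. \<forall>y\<in>V. gdist V E x y \<le> D \<longrightarrow>
        (let i = gdist V E x y in
          real (bnum V E x y) = (qbr b D - qbr b i) * (\<beta> - \<alpha> * qbr b i) \<and>
          real (cnum V E x y) = qbr b i * (1 + \<alpha> * qbr b (i - 1))))"

definition adj_eigenvalue :: "'a set \<Rightarrow> ('a \<Rightarrow> 'a \<Rightarrow> bool) \<Rightarrow> real \<Rightarrow> bool" where
  "adj_eigenvalue V E \<theta> \<longleftrightarrow> (\<exists>f :: 'a \<Rightarrow> real. (\<exists>x\<in>V. f x \<noteq> 0) \<and>
      (\<forall>x\<in>V. (\<Sum>y\<in>{y \<in> V. E x y}. f y) = \<theta> * f x))"

definition min_eigenvalue :: "'a set \<Rightarrow> ('a \<Rightarrow> 'a \<Rightarrow> bool) \<Rightarrow> real" where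
  "min_eigenvalue V E = Min {\<theta>. adj_eigenvalue V E \<theta>}"

definition is_clique :: "'a set \<Rightarrow> ('a \<Rightarrow> 'a \<Rightarrow> bool) \<Rightarrow> 'a set \<Rightarrow> bool" where
  "is_clique V E C \<longleftrightarrow> C \<subseteq> V \<and> (\<forall>x\<in>C. \<forall>y\<in>C. x \<noteq> y \<longrightarrow> E x y)"

definition delsarte_clique :: "'a set \<Rightarrow> ('a \<Rightarrow> 'a \<Rightarrow> bool) \<Rightarrow> 'a set \<Rightarrow> bool" where
  "delsarte_clique V E C \<longleftrightarrow> is_clique V E C \<and>
     real (card C) = 1 + real (valency V E) / (- min_eigenvalue V E)"

definition geometric_wrt :: "'a set \<Rightarrow> ('a \<Rightarrow> 'a \<Rightarrow> bool) \<Rightarrow> 'a set set \<Rightarrow> bool" where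
  "geometric_wrt V E \<C> \<longleftrightarrow> (\<forall>C\<in>\<C>. delsarte_clique V E C) \<and>
     (\<forall>x y. E x y \<longrightarrow> (\<exists>!C. C \<in> \<C> \<and> x \<in> C \<and> y \<in> C))"

end

theory Submission imports Defs "HOL-Computational_Algebra.Polynomial" begin

fun PP :: "(nat \<Rightarrow> real) \<Rightarrow> (nat \<Rightarrow> real) \<Rightarrow> (nat \<Rightarrow> real) \<Rightarrow> nat \<Rightarrow> real poly" where
  "PP A B C 0 = 1"
| "PP A B C (Suc 0) = smult (1 / C 1) [:- A 0, 1:]"
| "PP A B C (Suc (Suc j)) = smult (1 / C (Suc (Suc j)))
      ([:- A (Suc j), 1:] * PP A B C (Suc j) - smult (B j) (PP A B C j))"

locale cp =
  fixes V :: "'a set" and E :: "'a \<Rightarrow> 'a \<Rightarrow> bool" and D :: nat and b :: int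
    and \<alpha> \<beta> :: real
  assumes CP: "classical_parameters V E D b \<alpha> \<beta>" and b2: "b \<ge> 2" and D3: "D \<ge> 3"
begin

abbreviation "d \<equiv> gdist V E"
abbreviation "N y \<equiv> {z \<in> V. E y z}"

definition Q :: "nat \<Rightarrow> real" where "Q j = qbr b j"
definition Bf :: "nat \<Rightarrow> real" where "Bf i = (Q D - Q i) * (\<beta> - \<alpha> * Q i)"
definition Cf :: "nat \<Rightarrow> real" where "Cf i = Q i * (1 + \<alpha> * Q (i - 1))"
definition K :: real where "K = Q D * \<beta>"
definition Af :: "nat \<Rightarrow> real" where "Af i = K - Bf i - Cf i"

lemma DR: "distance_regular V E" using CP unfolding classical_parameters_def by auto
lemma SG: "simple_graph V E" using DR unfolding distance_regular_def by auto
lemma CONN: "connected_graph V E" using DR unfolding distance_regular_def by auto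
lemma finV: "finite V" and Vne: "V \<noteq> {}" using SG unfolding simple_graph_def by auto
lemma EV: "E x y \<Longrightarrow> x \<in> V \<and> y \<in> V" using SG unfolding simple_graph_def by auto
lemma Esym: "E x y \<Longrightarrow> E y x" using SG unfolding simple_graph_def by auto
lemma Eirr: "E x y \<Longrightarrow> x \<noteq> y" using SG unfolding simple_graph_def by auto

lemma walk_app: "walk V E m x y \<Longrightarrow> walk V E n y z \<Longrightarrow> walk V E (m+n) x z"
  by (induction m arbitrary: x) auto

lemma walk_snoc: "walk V E n x y \<Longrightarrow> E y z \<Longrightarrow> walk V E (Suc n) x z"
proof -
  assume a: "walk V E n x y" "E y z"
  have "walk V E 1 y z" using a(2) EV by auto
  from walk_app[OF a(1) this] show ?thesis by simp
qed

lemma walk_rev: "walk V E n x y \<Longrightarrow> walk V E n y x"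
proof (induction n arbitrary: x)
  case 0 then show ?case by simp
next
  case (Suc n)
  then obtain z where z: "z \<in> V" "E x z" "walk V E n z y" by auto
  with Suc.IH have "walk V E n y z" by auto
  then show ?case using walk_snoc Esym z(2) by blast
qed

lemma d_walk: "x \<in> V \<Longrightarrow> y \<in> V \<Longrightarrow> walk V E (d x y) x y"
proof -
  assume "x \<in> V" "y \<in> V"
  then have "\<exists>n. walk V E n x y" using CONN unfolding connected_graph_def by auto
  then show ?thesis unfolding gdist_def by (rule LeastI_ex)
qed

lemma d_le: "walk V E n x y \<Longrightarrow> d x y \<le> n"
  unfolding gdist_def by (rule Least_le)

lemma d_sym: "x \<in> V \<Longrightarrow> y \<in> V \<Longrightarrow> d x y = d y x"
  by (meson antisym d_le d_walk walk_rev)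

lemma d_self: "d x x = 0"
  using d_le[of 0 x x] by simp

lemma d_0: "x \<in> V \<Longrightarrow> y \<in> V \<Longrightarrow> d x y = 0 \<longleftrightarrow> x = y"
  using d_walk[of x y] d_self by auto

lemma d_adj: "E x y \<Longrightarrow> d x y = 1"
proof -
  assume a: "E x y"
  have "walk V E 1 x y" using a EV by auto
  then have "d x y \<le> 1" by (rule d_le)
  moreover have "d x y \<noteq> 0" using a d_0 EV Eirr by metis
  ultimately show ?thesis by simp
qed

lemma d_tri: "x \<in> V \<Longrightarrow> E y z \<Longrightarrow> d x z \<le> d x y + 1"
  by (metis EV Suc_eq_plus1 d_le d_walk walk_snoc)

lemma d_tri2: "x \<in> V \<Longrightarrow> E y z \<Longrightarrow> d x y \<le> d x z + 1"
  using d_tri Esym by blast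

lemma d_down: "x \<in> V \<Longrightarrow> y \<in> V \<Longrightarrow> d x y = Suc n \<Longrightarrow> \<exists>z\<in>V. E y z \<and> d x z = n"
proof -
  assume a: "x \<in> V" "y \<in> V" "d x y = Suc n"
  have "d y x = Suc n" using a d_sym by metis
  then have "walk V E (Suc n) y x" using d_walk[OF a(2,1)] by metis
  then obtain z where z: "z \<in> V" "E y z" "walk V E n z x" by auto
  have "d x z \<le> n" using d_le[OF walk_rev[OF z(3)]] .
  moreover have "d x y \<le> d x z + 1" using d_tri2[OF a(1) z(2)] .
  ultimately have "d x z = n" using a(3) by linarith
  then show ?thesis using z by blast
qed

lemma diamset_fin: "finite {gdist V E x y | x y. x \<in> V \<and> y \<in> V}"
proof -
  have "{gdist V E x y | x y. x \<in> V \<and> y \<in> V} \<subseteq> (\<lambda>p. d (fst p) (snd p)) ` (V \<times> V)"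
  proof
    fix t assume "t \<in> {gdist V E x y | x y. x \<in> V \<and> y \<in> V}"
    then obtain x y where "t = d x y" "x \<in> V" "y \<in> V" by blast
    then show "t \<in> (\<lambda>p. d (fst p) (snd p)) ` (V \<times> V)"
      by (intro image_eqI[of _ _ "(x,y)"]) auto
  qed
  moreover have "finite ((\<lambda>p. d (fst p) (snd p)) ` (V \<times> V))" using finV by simp
  ultimately show ?thesis by (rule finite_subset)
qed

lemma diam: "diameter V E = D" using CP unfolding classical_parameters_def by auto

lemma d_le_D: "x \<in> V \<Longrightarrow> y \<in> V \<Longrightarrow> d x y \<le> D"
  using Max_ge[OF diamset_fin, of "d x y"] diam unfolding diameter_def by blast

lemma exists_D: "\<exists>x\<in>V. \<exists>y\<in>V. d x y = D"
proof -
  have "{gdist V E x y | x y. x \<in> V \<and> y \<in> V} \<noteq> {}" using Vne by blast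
  from Max_in[OF diamset_fin this] diam have "D \<in> {gdist V E x y | x y. x \<in> V \<and> y \<in> V}"
    unfolding diameter_def by simp
  then show ?thesis by blast
qed

lemma exists_dist: "i \<le> D \<Longrightarrow> \<exists>x\<in>V. \<exists>y\<in>V. d x y = i"
proof -
  obtain x y where xy: "x \<in> V" "y \<in> V" "d x y = D" using exists_D by blast
  have "\<forall>n. n \<le> D \<longrightarrow> (\<exists>y'\<in>V. d x y' = D - n)"
  proof (intro allI)
    fix n show "n \<le> D \<longrightarrow> (\<exists>y'\<in>V. d x y' = D - n)"
    proof (induction n)
      case 0 then show ?case using xy by auto
    next
      case (Suc n)
      show ?case
      proof
        assume "Suc n \<le> D"
        then have "n \<le> D" "D - n = Suc (D - Suc n)" by auto
        then obtain y' where "y' \<in> V" "d x y' = Suc (D - Suc n)" using Suc.IH by auto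
        then show "\<exists>y'\<in>V. d x y' = D - Suc n" using d_down xy(1) by blast
      qed
    qed
  qed
  moreover assume "i \<le> D"
  ultimately obtain y' where "y' \<in> V" "d x y' = D - (D - i)" by (meson diff_le_self)
  moreover have "D - (D - i) = i" using \<open>i \<le> D\<close> by simp
  ultimately show ?thesis using xy(1) by auto
qed


lemma b_ne1: "real_of_int b - 1 \<noteq> 0" using b2 by simp

lemma Q0[simp]: "Q 0 = 0" by (simp add: Q_def qbr_def)
lemma Q1[simp]: "Q 1 = 1" using b_ne1 by (simp add: Q_def qbr_def)
lemma Qsuc: "Q (Suc j) = Q j + real_of_int b ^ j"
  using b_ne1 by (simp add: Q_def qbr_def field_simps)

lemma Q_mono: "i < j \<Longrightarrow> Q i < Q j"
proof (induction j)
  case 0 then show ?case by simp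
next
  case (Suc j)
  have "0 < real_of_int b ^ j" using b2 by simp
  then have "Q j < Q (Suc j)" using Qsuc by simp
  then show ?case using Suc by (cases "i = j") auto
qed

lemma Q_pos: "0 < j \<Longrightarrow> 0 < Q j" using Q_mono[of 0 j] by simp
lemma Q_nonneg: "0 \<le> Q j" using Q_pos[of j] by (cases j) auto

lemma bc: "x \<in> V \<Longrightarrow> y \<in> V \<Longrightarrow>
   real (bnum V E x y) = Bf (d x y) \<and> real (cnum V E x y) = Cf (d x y)"
  using CP d_le_D[of x y] unfolding classical_parameters_def Bf_def Cf_def Q_def Let_def by auto

lemma finN: "finite (N x)" using finV by simp

lemma deg: "x \<in> V \<Longrightarrow> real (card (N x)) = K"
proof -
  assume x: "x \<in> V"
  have "{z \<in> V. E x z \<and> d x z = d x x + 1} = N x" using d_adj d_self by auto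
  then have "real (card (N x)) = real (bnum V E x x)" unfolding bnum_def by simp
  also have "\<dots> = Bf 0" using bc[OF x x] d_self by simp
  finally show ?thesis by (simp add: Bf_def K_def)
qed

lemma Cpos: "1 \<le> i \<Longrightarrow> i \<le> D \<Longrightarrow> Cf i \<ge> 1"
proof -
  assume i: "1 \<le> i" "i \<le> D"
  obtain x y where xy: "x \<in> V" "y \<in> V" "d x y = i" using exists_dist i(2) by blast
  then have "d x y = Suc (i - 1)" using i by simp
  then obtain z where z: "z \<in> V" "E y z" "d x z = i - 1" using d_down xy by blast
  have "z \<in> {z \<in> V. E y z \<and> d x z + 1 = d x y}" using z xy i by auto
  moreover have "finite {z \<in> V. E y z \<and> d x z + 1 = d x y}" using finV by simp
  ultimately have "card {z \<in> V. E y z \<and> d x z + 1 = d x y} \<ge> 1"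
    by (metis (no_types, lifting) One_nat_def Suc_leI card_gt_0_iff empty_iff)
  then have "real (cnum V E x y) \<ge> 1" unfolding cnum_def by simp
  then show ?thesis using bc[OF xy(1,2)] xy(3) by simp
qed

lemma Bpos: "i < D \<Longrightarrow> Bf i \<ge> 1"
proof -
  assume i: "i < D"
  obtain x y where xy: "x \<in> V" "y \<in> V" "d x y = Suc i" using exists_dist i by (metis Suc_leI)
  then obtain z where z: "z \<in> V" "E y z" "d x z = i" using d_down xy by blast
  have "y \<in> {w \<in> V. E z w \<and> d x w = d x z + 1}" using z xy Esym by auto
  moreover have "finite {w \<in> V. E z w \<and> d x w = d x z + 1}" using finV by simp
  ultimately have "card {w \<in> V. E z w \<and> d x w = d x z + 1} \<ge> 1"
    by (metis (no_types, lifting) One_nat_def Suc_leI card_gt_0_iff empty_iff)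
  then have "real (bnum V E x z) \<ge> 1" unfolding bnum_def by simp
  then show ?thesis using bc[OF xy(1) z(1)] z(3) by simp
qed

lemma K_pos: "K \<ge> 1" using Bpos[of 0] D3 by (simp add: Bf_def K_def)
lemma beta_pos: "\<beta> > 0"
proof -
  have "Q D > 0" using Q_pos D3 by simp
  show ?thesis
  proof (rule ccontr)
    assume "\<not> \<beta> > 0"
    then have "Q D * \<beta> \<le> 0" using \<open>Q D > 0\<close> by (simp add: mult_nonneg_nonpos)
    then show False using K_pos unfolding K_def by simp
  qed
qed

lemma c_pos: "j < D \<Longrightarrow> 1 + \<alpha> * Q j > 0"
proof -
  assume j: "j < D"
  have "Cf (Suc j) \<ge> 1" using Cpos j by simp
  then have "Q (Suc j) * (1 + \<alpha> * Q j) > 0" unfolding Cf_def by simp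
  moreover have "Q (Suc j) > 0" using Q_pos by simp
  ultimately show ?thesis by (simp add: zero_less_mult_iff)
qed

lemma b_pos: "j < D \<Longrightarrow> \<beta> - \<alpha> * Q j > 0"
proof -
  assume j: "j < D"
  have "Bf j \<ge> 1" using Bpos j by simp
  then have "(Q D - Q j) * (\<beta> - \<alpha> * Q j) > 0" unfolding Bf_def by simp
  moreover have "Q D - Q j > 0" using Q_mono j by simp
  ultimately show ?thesis by (simp add: zero_less_mult_iff)
qed

lemma Cf0[simp]: "Cf 0 = 0" by (simp add: Cf_def)
lemma Bf0: "Bf 0 = K" by (simp add: Bf_def K_def)
lemma Af0: "Af 0 = 0" by (simp add: Af_def Bf0)
lemma BfD: "Bf D = 0" by (simp add: Bf_def)
lemma Q1'[simp]: "Q (Suc 0) = 1" using Q1 by simp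
lemma Cf1: "Cf 1 = 1" by (simp add: Cf_def)
lemma Cf1'[simp]: "Cf (Suc 0) = 1" by (simp add: Cf_def)

lemma NB: "x \<in> V \<Longrightarrow> y \<in> V \<Longrightarrow>
  (\<Sum>z\<in>N y. h (d x z)) = Cf (d x y) * h (d x y - 1) + Af (d x y) * h (d x y) + Bf (d x y) * h (d x y + 1)"
proof -
  assume x: "x \<in> V" and y: "y \<in> V"
  define j where "j = d x y"
  define S1 where "S1 = {z \<in> V. E y z \<and> d x z + 1 = j}"
  define S2 where "S2 = {z \<in> V. E y z \<and> d x z = j}"
  define S3 where "S3 = {z \<in> V. E y z \<and> d x z = j + 1}"
  have U: "N y = S1 \<union> S2 \<union> S3"
  proof
    show "N y \<subseteq> S1 \<union> S2 \<union> S3"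
    proof
      fix z assume z: "z \<in> N y"
      then have "d x z \<le> j + 1" "j \<le> d x z + 1" using d_tri[OF x] d_tri2[OF x] j_def by auto
      then have "d x z + 1 = j \<or> d x z = j \<or> d x z = j + 1" by linarith
      then show "z \<in> S1 \<union> S2 \<union> S3" using z S1_def S2_def S3_def by auto
    qed
  qed (auto simp: S1_def S2_def S3_def)
  have fin: "finite S1" "finite S2" "finite S3" using finV by (auto simp: S1_def S2_def S3_def)
  have dis: "S1 \<inter> S2 = {}" "(S1 \<union> S2) \<inter> S3 = {}" by (auto simp: S1_def S2_def S3_def)
  have s1: "(\<Sum>z\<in>S1. h (d x z)) = real (card S1) * h (j - 1)"
  proof -
    have "(\<Sum>z\<in>S1. h (d x z)) = (\<Sum>z\<in>S1. h (j - 1))"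
      by (rule sum.cong) (auto simp: S1_def)
    then show ?thesis by simp
  qed
  have s2: "(\<Sum>z\<in>S2. h (d x z)) = real (card S2) * h j"
  proof -
    have "(\<Sum>z\<in>S2. h (d x z)) = (\<Sum>z\<in>S2. h j)"
      by (rule sum.cong) (auto simp: S2_def)
    then show ?thesis by simp
  qed
  have s3: "(\<Sum>z\<in>S3. h (d x z)) = real (card S3) * h (j + 1)"
  proof -
    have "(\<Sum>z\<in>S3. h (d x z)) = (\<Sum>z\<in>S3. h (j + 1))"
      by (rule sum.cong) (auto simp: S3_def)
    then show ?thesis by simp
  qed
  have c1: "real (card S1) = Cf j" using bc[OF x y] unfolding cnum_def S1_def j_def by simp
  have c3: "real (card S3) = Bf j" using bc[OF x y] unfolding bnum_def S3_def j_def by simp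
  have "card (N y) = card S1 + card S2 + card S3"
    using U fin dis by (simp add: card_Un_disjoint)
  then have c2: "real (card S2) = Af j" using deg[OF y] c1 c3 unfolding Af_def by simp
  have "(\<Sum>z\<in>N y. h (d x z)) = (\<Sum>z\<in>S1. h (d x z)) + (\<Sum>z\<in>S2. h (d x z)) + (\<Sum>z\<in>S3. h (d x z))"
    using U fin dis by (simp add: sum.union_disjoint)
  then show ?thesis using s1 s2 s3 c1 c2 c3 j_def by simp
qed


definition rho :: "nat \<Rightarrow> real" where "rho j = - (1 + \<alpha> * Q j) / (\<beta> - \<alpha> * Q j)"

primrec u :: "nat \<Rightarrow> real" where
  "u 0 = 1"
| "u (Suc j) = rho j * u j"

lemma rho_nz: "j < D \<Longrightarrow> rho j \<noteq> 0"
  using c_pos b_pos unfolding rho_def by (smt (verit) divide_eq_0_iff)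

lemma u_nz: "j \<le> D \<Longrightarrow> u j \<noteq> 0"
  by (induction j) (auto simp: rho_nz)

lemma Brho: "i \<le> D \<Longrightarrow> Bf i * rho i = - (Q D - Q i) * (1 + \<alpha> * Q i)"
proof (cases "i = D")
  case True then show ?thesis by (simp add: BfD)
next
  case False
  assume "i \<le> D"
  with False have "i < D" by simp
  then have "\<beta> - \<alpha> * Q i \<noteq> 0" using b_pos by (smt (verit))
  then show ?thesis unfolding Bf_def rho_def by (simp add: field_simps)
qed

lemma u_eig: "j \<le> D \<Longrightarrow> Cf j * u (j - 1) + Af j * u j + Bf j * u (j + 1) = - Q D * u j"
proof (cases j)
  case 0
  then show ?thesis using beta_pos by (simp add: Af0 Bf0 K_def rho_def)
next
  case (Suc i)
  assume j: "j \<le> D"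
  then have i: "i < D" using Suc by simp
  have bne: "\<beta> - \<alpha> * Q i \<noteq> 0" using b_pos[OF i] by (smt (verit))
  have key: "Cf (Suc i) + (Af (Suc i) - (Q D - Q (Suc i)) * (1 + \<alpha> * Q (Suc i)) + Q D) * rho i = 0"
    unfolding rho_def Af_def Bf_def Cf_def K_def using bne by (simp add: field_simps)
  have e: "Bf (Suc i) * (rho (Suc i) * (rho i * u i)) = - (Q D - Q (Suc i)) * (1 + \<alpha> * Q (Suc i)) * (rho i * u i)"
    using Brho[of "Suc i"] j Suc by (metis mult.assoc)
  have "Cf (Suc i) * u i + Af (Suc i) * (rho i * u i) + Bf (Suc i) * (rho (Suc i) * (rho i * u i))
      = - Q D * (rho i * u i)"
    using e key by algebra
  then show ?thesis using Suc by simp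
qed

lemma eig_u: "x \<in> V \<Longrightarrow> y \<in> V \<Longrightarrow> (\<Sum>z\<in>N y. u (d x z)) = - Q D * u (d x y)"
  using NB[of x y u] u_eig[of "d x y"] d_le_D[of x y] by simp

lemma eig_negQD: "adj_eigenvalue V E (- Q D)"
proof -
  obtain x0 where x0: "x0 \<in> V" using Vne by blast
  show ?thesis unfolding adj_eigenvalue_def
    by (rule exI[of _ "\<lambda>y. u (d x0 y)"]) (use x0 eig_u d_self in \<open>auto intro!: bexI[of _ x0]\<close>)
qed

lemma sphere:
  assumes x0: "x0 \<in> V" and H: "\<forall>y\<in>V. (\<Sum>z\<in>N y. f z) = \<theta> * f y"
  defines "F \<equiv> \<lambda>j. (\<Sum>y\<in>{y \<in> V. d x0 y = j}. f y)"
  shows "\<theta> * F j = Cf (j + 1) * F (j + 1) + Af j * F j + (if j = 0 then 0 else Bf (j - 1) * F (j - 1))"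
proof -
  define ind where "ind = (\<lambda>t::nat. if t = j then (1::real) else 0)"
  have Fi: "F i = (\<Sum>y\<in>V. if d x0 y = i then f y else 0)" for i
    unfolding F_def using finV by (simp add: sum.inter_filter)
  have s1: "\<theta> * F j = (\<Sum>y\<in>V. if d x0 y = j then (\<Sum>z\<in>N y. f z) else 0)"
    unfolding Fi sum_distrib_left by (rule sum.cong) (auto simp: H)
  also have "\<dots> = (\<Sum>y\<in>V. \<Sum>z\<in>V. if d x0 y = j \<and> E y z then f z else 0)"
  proof (rule sum.cong)
    fix y assume "y \<in> V"
    have "(\<Sum>z\<in>N y. f z) = (\<Sum>z\<in>V. if E y z then f z else 0)" using finV by (simp add: sum.inter_filter)
    then show "(if d x0 y = j then (\<Sum>z\<in>N y. f z) else 0) = (\<Sum>z\<in>V. if d x0 y = j \<and> E y z then f z else 0)"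
      by simp
  qed simp
  also have "\<dots> = (\<Sum>z\<in>V. \<Sum>y\<in>V. if d x0 y = j \<and> E y z then f z else 0)" by (rule sum.swap)
  also have "\<dots> = (\<Sum>z\<in>V. f z * (\<Sum>y\<in>N z. ind (d x0 y)))"
  proof (rule sum.cong)
    fix z assume "z \<in> V"
    have "(\<Sum>y\<in>N z. ind (d x0 y)) = (\<Sum>y\<in>V. if E z y then ind (d x0 y) else 0)"
      using finV by (simp add: sum.inter_filter)
    then have "f z * (\<Sum>y\<in>N z. ind (d x0 y)) = (\<Sum>y\<in>V. f z * (if E z y then ind (d x0 y) else 0))"
      by (simp add: sum_distrib_left)
    also have "\<dots> = (\<Sum>y\<in>V. if d x0 y = j \<and> E y z then f z else 0)"
      by (rule sum.cong) (auto simp: ind_def dest: Esym)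
    finally show "(\<Sum>y\<in>V. if d x0 y = j \<and> E y z then f z else 0) = f z * (\<Sum>y\<in>N z. ind (d x0 y))" by simp
  qed simp
  also have "\<dots> = (\<Sum>z\<in>V. (if d x0 z = j + 1 then Cf (j + 1) * f z else 0)
       + (if d x0 z = j then Af j * f z else 0)
       + (if j \<noteq> 0 \<and> d x0 z = j - 1 then Bf (j - 1) * f z else 0))"
  proof (rule sum.cong)
    fix z assume z: "z \<in> V"
    define t where "t = d x0 z"
    have "(\<Sum>y\<in>N z. ind (d x0 y)) = Cf t * ind (t - 1) + Af t * ind t + Bf t * ind (t + 1)"
      using NB[OF x0 z, of ind] t_def by simp
    moreover have "Cf t * ind (t - 1) = (if t = j + 1 then Cf (j + 1) else 0)"
      by (cases t) (auto simp: ind_def)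
    moreover have "Af t * ind t = (if t = j then Af j else 0)" by (auto simp: ind_def)
    moreover have "Bf t * ind (t + 1) = (if j \<noteq> 0 \<and> t = j - 1 then Bf (j - 1) else 0)"
      by (auto simp: ind_def)
    ultimately show "f z * (\<Sum>y\<in>N z. ind (d x0 y)) = (if d x0 z = j + 1 then Cf (j + 1) * f z else 0)
       + (if d x0 z = j then Af j * f z else 0)
       + (if j \<noteq> 0 \<and> d x0 z = j - 1 then Bf (j - 1) * f z else 0)"
      using t_def by (simp add: algebra_simps)
  qed simp
  also have "\<dots> = Cf (j + 1) * F (j + 1) + Af j * F j + (if j = 0 then 0 else Bf (j - 1) * F (j - 1))"
    unfolding Fi sum.distrib by (simp add: sum_distrib_left if_distrib cong: if_cong)
  finally show ?thesis .
qed


definition P :: "nat \<Rightarrow> real poly" where "P j = PP Af Bf Cf j"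
definition Qp :: "real poly" where "Qp = [:- Af D, 1:] * P D - smult (Bf (D - 1)) (P (D - 1))"
definition qs :: "nat \<Rightarrow> real" where "qs j = - (Q D - Q j) / Q (Suc j)"

lemma Cf_nz: "1 \<le> i \<Longrightarrow> i \<le> D \<Longrightarrow> Cf i \<noteq> 0" using Cpos by fastforce

lemma poly_P_rec: "Suc j \<le> D \<Longrightarrow> Cf (Suc j) * poly (P (Suc j)) \<theta>
   = (\<theta> - Af j) * poly (P j) \<theta> - (if j = 0 then 0 else Bf (j - 1) * poly (P (j - 1)) \<theta>)"
proof (cases j)
  case 0 then show ?thesis by (simp add: P_def Cf1 Af0)
next
  case (Suc i)
  assume "Suc j \<le> D"
  then have "Cf (Suc (Suc i)) \<noteq> 0" using Cf_nz Suc by simp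
  then show ?thesis using Suc by (simp add: P_def algebra_simps)
qed

lemma P0: "poly (P 0) \<theta> = 1" by (simp add: P_def)

lemma rec:
  assumes R: "\<forall>j<D. \<theta> * F j = Cf (j + 1) * F (j + 1) + Af j * F j + (if j = 0 then 0 else Bf (j - 1) * F (j - 1))"
  shows "j \<le> D \<Longrightarrow> F j = F 0 * poly (P j) \<theta>"
proof (induction j rule: less_induct)
  case (less j)
  show ?case
  proof (cases j)
    case 0 then show ?thesis by (simp add: P0)
  next
    case (Suc i)
    have Ci: "Cf (Suc i) \<noteq> 0" using Cf_nz less.prems Suc by simp
    have Ri: "\<theta> * F i = Cf (Suc i) * F (Suc i) + Af i * F i + (if i = 0 then 0 else Bf (i - 1) * F (i - 1))"
      using R less.prems Suc by simp
    have Pi: "Cf (Suc i) * poly (P (Suc i)) \<theta>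
       = (\<theta> - Af i) * poly (P i) \<theta> - (if i = 0 then 0 else Bf (i - 1) * poly (P (i - 1)) \<theta>)"
      using poly_P_rec less.prems Suc by simp
    have IH1: "F i = F 0 * poly (P i) \<theta>" using less.IH[of i] less.prems Suc by linarith
    have IH2: "i \<noteq> 0 \<Longrightarrow> F (i - 1) = F 0 * poly (P (i - 1)) \<theta>" using less.IH[of "i - 1"] less.prems Suc by linarith
    have "Cf (Suc i) * F (Suc i) = Cf (Suc i) * (F 0 * poly (P (Suc i)) \<theta>)"
    proof (cases "i = 0")
      case True
      then show ?thesis using Ri Pi IH1 by (simp add: algebra_simps P0 Af0)
    next
      case False
      have Ri': "\<theta> * F i = Cf (Suc i) * F (Suc i) + Af i * F i + Bf (i - 1) * F (i - 1)"
        using Ri False by simp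
      have Pi': "Cf (Suc i) * poly (P (Suc i)) \<theta> = (\<theta> - Af i) * poly (P i) \<theta> - Bf (i - 1) * poly (P (i - 1)) \<theta>"
        using Pi False by simp
      have IH2': "F (i - 1) = F 0 * poly (P (i - 1)) \<theta>" using IH2 False by simp
      show ?thesis using Ri' Pi' IH1 IH2' by algebra
    qed
    then show ?thesis using Ci Suc by simp
  qed
qed

lemma qs_neg: "j < D \<Longrightarrow> qs j < 0"
proof -
  assume "j < D"
  then have "Q D - Q j > 0" "Q (Suc j) > 0" using Q_mono Q_pos by auto
  then show ?thesis unfolding qs_def by (simp add: divide_neg_pos)
qed

lemma qsD: "qs D = 0" by (simp add: qs_def)

lemma Id: "k < D \<Longrightarrow> - Q D - Af (Suc k) - Bf k / qs k = Cf (Suc (Suc k)) * qs (Suc k)"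
proof -
  assume k: "k < D"
  have n1: "Q D - Q k \<noteq> 0" using Q_mono[OF k] by simp
  have n2: "Q (Suc k) \<noteq> 0" "Q (Suc (Suc k)) \<noteq> 0" using Q_pos by (metis less_irrefl zero_less_Suc)+
  show ?thesis unfolding qs_def Af_def Bf_def Cf_def K_def using n1 n2
    by (simp add: field_simps)
qed

lemma sturm_step:
  assumes r: "r < qs j" and j: "j < D" and th: "\<theta> < - Q D"
  shows "\<theta> - Af (Suc j) - Bf j / r < Cf (Suc (Suc j)) * qs (Suc j)"
proof -
  have q: "qs j < 0" using qs_neg j .
  have "inverse (qs j) < inverse r" using less_imp_inverse_less_neg[OF r q] .
  moreover have "Bf j > 0" using Bpos j by fastforce
  ultimately have "Bf j * inverse (qs j) < Bf j * inverse r" by simp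
  then have "Bf j / qs j < Bf j / r" by (simp add: divide_inverse)
  then show ?thesis using Id[OF j] th by linarith
qed

lemma sturm: "\<theta> < - Q D \<Longrightarrow> j < D \<Longrightarrow> poly (P j) \<theta> \<noteq> 0 \<and> poly (P (Suc j)) \<theta> / poly (P j) \<theta> < qs j"
proof (induction j)
  case 0
  have "poly (P 1) \<theta> = \<theta>" using poly_P_rec[of 0 \<theta>] D3 by (simp add: Cf1 Af0 P0)
  then show ?case using 0 by (simp add: P0 qs_def)
next
  case (Suc j)
  define p where "p = (\<lambda>i. poly (P i) \<theta>)"
  have j: "j < D" using Suc by simp
  from Suc.IH Suc.prems j have IH: "p j \<noteq> 0" "p (Suc j) / p j < qs j" by (auto simp: p_def)
  define r where "r = p (Suc j) / p j"
  have rneg: "r < 0" using IH qs_neg[OF j] r_def by simp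
  have pS: "p (Suc j) = r * p j" using IH r_def by simp
  then have pSnz: "p (Suc j) \<noteq> 0" using rneg IH by simp
  have "Cf (Suc (Suc j)) \<ge> 1" using Cpos[of "Suc (Suc j)"] Suc.prems by simp
  then have C: "Cf (Suc (Suc j)) > 0" by simp
  have rec2: "Cf (Suc (Suc j)) * p (Suc (Suc j)) = (\<theta> - Af (Suc j)) * p (Suc j) - Bf j * p j"
    using poly_P_rec[of "Suc j" \<theta>] Suc.prems by (simp add: p_def)
  have "Cf (Suc (Suc j)) * (p (Suc (Suc j)) / p (Suc j)) = (Cf (Suc (Suc j)) * p (Suc (Suc j))) / p (Suc j)"
    by simp
  also have "\<dots> = ((\<theta> - Af (Suc j)) * p (Suc j) - Bf j * p j) / p (Suc j)" using rec2 by simp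
  also have "\<dots> = (\<theta> - Af (Suc j)) - Bf j * p j / p (Suc j)" using pSnz by (simp add: diff_divide_distrib)
  also have "\<dots> = \<theta> - Af (Suc j) - Bf j / r" by (simp add: r_def)
  also have "\<dots> < Cf (Suc (Suc j)) * qs (Suc j)" using sturm_step[of r j \<theta>] IH r_def j Suc.prems by simp
  finally have "Cf (Suc (Suc j)) * (p (Suc (Suc j)) / p (Suc j)) < Cf (Suc (Suc j)) * qs (Suc j)" .
  then have "p (Suc (Suc j)) / p (Suc j) < qs (Suc j)" using C by (simp only: mult_less_cancel_left_pos)
  then show ?case using pSnz by (simp add: p_def)
qed

lemma Qp_nz_below: "\<theta> < - Q D \<Longrightarrow> poly Qp \<theta> \<noteq> 0"
proof -
  assume th: "\<theta> < - Q D"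
  obtain k where k: "D = Suc k" using D3 by (metis Suc_pred' less_le_trans numeral_3_eq_3 zero_less_Suc)
  have kD: "k < D" using k by simp
  define p where "p = (\<lambda>i. poly (P i) \<theta>)"
  have S: "p k \<noteq> 0" "p D / p k < qs k" using sturm[OF th kD] k by (auto simp: p_def)
  define r where "r = p D / p k"
  have rneg: "r < 0" using S qs_neg[OF kD] r_def by simp
  have "\<theta> - Af D - Bf k / r < Cf (Suc D) * qs D" using sturm_step[OF _ kD th, of r] S r_def k by simp
  then have neg: "\<theta> - Af D - Bf k / r < 0" by (simp add: qsD)
  have kk: "D - Suc 0 = k" using k by simp
  have "poly Qp \<theta> = (\<theta> - Af D) * p D - Bf k * p k" by (simp add: Qp_def p_def kk algebra_simps)
  also have "\<dots> = p k * r * (\<theta> - Af D - Bf k / r)"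
  proof -
    have rnz: "r \<noteq> 0" using rneg by simp
    have pD: "p D = r * p k" using S(1) unfolding r_def by simp
    have "p k * r * (\<theta> - Af D - Bf k / r) = (\<theta> - Af D) * (r * p k) - Bf k * p k * (r / r)"
      by (simp add: algebra_simps)
    also have "\<dots> = (\<theta> - Af D) * p D - Bf k * p k" using rnz pD by simp
    finally show ?thesis by simp
  qed
  finally show ?thesis using S(1) rneg neg by simp
qed

lemma eig_root: "adj_eigenvalue V E \<theta> \<Longrightarrow> poly Qp \<theta> = 0"
proof -
  assume "adj_eigenvalue V E \<theta>"
  then obtain f x1 where x1: "x1 \<in> V" "f x1 \<noteq> 0" and H: "\<forall>x\<in>V. (\<Sum>y\<in>N x. f y) = \<theta> * f x"
    unfolding adj_eigenvalue_def by blast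
  define F where "F = (\<lambda>j. (\<Sum>y\<in>{y \<in> V. d x1 y = j}. f y))"
  have sph: "\<theta> * F j = Cf (j + 1) * F (j + 1) + Af j * F j + (if j = 0 then 0 else Bf (j - 1) * F (j - 1))" for j
    using sphere[OF x1(1) H] unfolding F_def by blast
  have F0: "F 0 = f x1"
  proof -
    have "{y \<in> V. d x1 y = 0} = {x1}" using d_0 x1 by auto
    then show ?thesis unfolding F_def by simp
  qed
  have FD1: "F (D + 1) = 0"
  proof -
    have e: "{y \<in> V. d x1 y = D + 1} = {}" using d_le_D x1 by fastforce
    show ?thesis unfolding F_def e by simp
  qed
  have Fj: "j \<le> D \<Longrightarrow> F j = F 0 * poly (P j) \<theta>" for j using rec[of \<theta> F] sph by blast
  have "\<theta> * F D = Af D * F D + Bf (D - 1) * F (D - 1)" using sph[of D] FD1 D3 by simp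
  then have "F 0 * (\<theta> * poly (P D) \<theta>) = F 0 * (Af D * poly (P D) \<theta> + Bf (D - 1) * poly (P (D - 1)) \<theta>)"
    using Fj[of D] Fj[of "D - 1"] by (simp add: algebra_simps)
  then have "\<theta> * poly (P D) \<theta> = Af D * poly (P D) \<theta> + Bf (D - 1) * poly (P (D - 1)) \<theta>"
    using F0 x1 by simp
  then show ?thesis by (simp add: Qp_def algebra_simps)
qed

lemma min_eig: "min_eigenvalue V E = - Q D"
proof -
  have "poly Qp (- Q D - 1) \<noteq> 0" by (rule Qp_nz_below) simp
  then have "Qp \<noteq> 0" by auto
  then have "finite {\<theta>. poly Qp \<theta> = 0}" by (rule poly_roots_finite)
  moreover have "{\<theta>. adj_eigenvalue V E \<theta>} \<subseteq> {\<theta>. poly Qp \<theta> = 0}" using eig_root by blast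
  ultimately have fin: "finite {\<theta>. adj_eigenvalue V E \<theta>}" by (rule finite_subset[rotated])
  have ge: "\<theta> \<ge> - Q D" if "adj_eigenvalue V E \<theta>" for \<theta>
    using eig_root[OF that] Qp_nz_below[of \<theta>] by force
  show ?thesis unfolding min_eigenvalue_def
    by (rule Min_eqI[OF fin]) (use ge eig_negQD in auto)
qed


end

locale geo = cp +
  fixes \<C> :: "'a set set"
  assumes G: "geometric_wrt V E \<C>"
begin

lemma valency_K: "real (valency V E) = K"
proof -
  have "(SOME x. x \<in> V) \<in> V" using Vne by (simp add: some_in_eq)
  then show ?thesis unfolding valency_def using deg by simp
qed

lemma cl: "C \<in> \<C> \<Longrightarrow> C \<subseteq> V \<and> (\<forall>x\<in>C. \<forall>y\<in>C. x \<noteq> y \<longrightarrow> E x y) \<and> real (card C) = 1 + \<beta>"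
proof -
  assume C: "C \<in> \<C>"
  then have dc: "delsarte_clique V E C" using G unfolding geometric_wrt_def by auto
  have "Q D > 0" using Q_pos D3 by simp
  then have "1 + real (valency V E) / (- min_eigenvalue V E) = 1 + \<beta>"
    using valency_K min_eig by (simp add: K_def)
  then show ?thesis using dc unfolding delsarte_clique_def is_clique_def by auto
qed

lemma clV: "C \<in> \<C> \<Longrightarrow> C \<subseteq> V" using cl by blast
lemma clE: "C \<in> \<C> \<Longrightarrow> x \<in> C \<Longrightarrow> y \<in> C \<Longrightarrow> x \<noteq> y \<Longrightarrow> E x y"
  using cl by blast
lemma clcard: "C \<in> \<C> \<Longrightarrow> real (card C) = 1 + \<beta>" using cl by blast

lemma uniq: "E x y \<Longrightarrow> \<exists>!C. C \<in> \<C> \<and> x \<in> C \<and> y \<in> C"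
  using G unfolding geometric_wrt_def by auto

lemma finCC: "finite \<C>"
proof -
  have "\<C> \<subseteq> Pow V" using clV by auto
  moreover have "finite (Pow V)" using finV by simp
  ultimately show ?thesis by (rule finite_subset)
qed

lemma finC: "C \<in> \<C> \<Longrightarrow> finite C" using clV finV by (meson finite_subset)

lemma Cne: "C \<in> \<C> \<Longrightarrow> C \<noteq> {}"
proof
  assume a: "C \<in> \<C>" "C = {}"
  have "real (card C) = 1 + \<beta>" using clcard[OF a(1)] .
  moreover have "card C = 0" using a(2) by simp
  ultimately show False using beta_pos by simp
qed

lemma Nsplit: "y \<in> V \<Longrightarrow> (\<Sum>z\<in>N y. h z) = (\<Sum>C\<in>{C \<in> \<C>. y \<in> C}. \<Sum>z\<in>C - {y}. h z)"
proof -
  assume y: "y \<in> V"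
  have U: "N y = (\<Union>C\<in>{C \<in> \<C>. y \<in> C}. C - {y})"
  proof
    show "N y \<subseteq> (\<Union>C\<in>{C \<in> \<C>. y \<in> C}. C - {y})"
    proof
      fix z assume z: "z \<in> N y"
      then obtain C where "C \<in> \<C>" "y \<in> C" "z \<in> C" using uniq by blast
      moreover have "z \<noteq> y" using z Eirr by auto
      ultimately show "z \<in> (\<Union>C\<in>{C \<in> \<C>. y \<in> C}. C - {y})" by blast
    qed
  next
    show "(\<Union>C\<in>{C \<in> \<C>. y \<in> C}. C - {y}) \<subseteq> N y"
    proof
      fix z assume "z \<in> (\<Union>C\<in>{C \<in> \<C>. y \<in> C}. C - {y})"
      then obtain C where C: "C \<in> \<C>" "y \<in> C" "z \<in> C" "z \<noteq> y" by blast
      then have "E y z" using clE by blast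
      then show "z \<in> N y" using EV by blast
    qed
  qed
  have "(\<Sum>z\<in>(\<Union>C\<in>{C \<in> \<C>. y \<in> C}. C - {y}). h z) = (\<Sum>C\<in>{C \<in> \<C>. y \<in> C}. \<Sum>z\<in>C - {y}. h z)"
  proof (rule sum.UNION_disjoint)
    show "finite {C \<in> \<C>. y \<in> C}" using finCC by simp
    show "\<forall>C\<in>{C \<in> \<C>. y \<in> C}. finite (C - {y})" using finC by simp
    show "\<forall>C1\<in>{C \<in> \<C>. y \<in> C}. \<forall>C2\<in>{C \<in> \<C>. y \<in> C}. C1 \<noteq> C2 \<longrightarrow> (C1 - {y}) \<inter> (C2 - {y}) = {}"
    proof (intro ballI impI)
      fix C1 C2 assume a: "C1 \<in> {C \<in> \<C>. y \<in> C}" "C2 \<in> {C \<in> \<C>. y \<in> C}" "C1 \<noteq> C2"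
      show "(C1 - {y}) \<inter> (C2 - {y}) = {}"
      proof (rule ccontr)
        assume "(C1 - {y}) \<inter> (C2 - {y}) \<noteq> {}"
        then obtain z where z: "z \<in> C1" "z \<in> C2" "z \<noteq> y" by blast
        then have "E y z" using clE[of C1 y z] a by blast
        then show False using uniq[of y z] a z by blast
      qed
    qed
  qed
  then show ?thesis using U by simp
qed

lemma mcount: "y \<in> V \<Longrightarrow> real (card {C \<in> \<C>. y \<in> C}) = Q D"
proof -
  assume y: "y \<in> V"
  have "real (card (N y)) = (\<Sum>z\<in>N y. (1::real))" by simp
  also have "\<dots> = (\<Sum>C\<in>{C \<in> \<C>. y \<in> C}. \<Sum>z\<in>C - {y}. (1::real))" using Nsplit[OF y] .
  also have "\<dots> = (\<Sum>C\<in>{C \<in> \<C>. y \<in> C}. \<beta>)"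
  proof (rule sum.cong)
    fix C assume C: "C \<in> {C \<in> \<C>. y \<in> C}"
    have "card C \<ge> 1" using C finC[of C] card_gt_0_iff[of C] by fastforce
    then have "real (card (C - {y})) = real (card C) - 1" using C finC by (simp add: of_nat_diff)
    then show "(\<Sum>z\<in>C - {y}. (1::real)) = \<beta>" using clcard[of C] C by simp
  qed simp
  also have "\<dots> = real (card {C \<in> \<C>. y \<in> C}) * \<beta>" by simp
  finally show ?thesis using deg[OF y] beta_pos unfolding K_def by simp
qed

lemma delsarte: "x \<in> V \<Longrightarrow> C \<in> \<C> \<Longrightarrow> (\<Sum>y\<in>C. u (d x y)) = 0"
proof -
  assume x: "x \<in> V" and C0: "C \<in> \<C>"
  define g where "g = (\<lambda>y. u (d x y))"
  have eg: "y \<in> V \<Longrightarrow> (\<Sum>z\<in>N y. g z) = - Q D * g y" for y using eig_u[OF x] g_def by simp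
  have "(\<Sum>C\<in>\<C>. (\<Sum>y\<in>C. g y)\<^sup>2) = (\<Sum>C\<in>\<C>. \<Sum>y\<in>C. g y * g y + g y * (\<Sum>z\<in>C - {y}. g z))"
  proof (rule sum.cong)
    fix C assume C: "C \<in> \<C>"
    have "(\<Sum>y\<in>C. g y)\<^sup>2 = (\<Sum>y\<in>C. g y * (\<Sum>z\<in>C. g z))" by (simp add: power2_eq_square sum_distrib_right)
    also have "\<dots> = (\<Sum>y\<in>C. g y * g y + g y * (\<Sum>z\<in>C - {y}. g z))"
    proof (rule sum.cong)
      fix y assume "y \<in> C"
      then have "(\<Sum>z\<in>C. g z) = g y + (\<Sum>z\<in>C - {y}. g z)" using finC[OF C] by (simp add: sum.remove)
      then show "g y * (\<Sum>z\<in>C. g z) = g y * g y + g y * (\<Sum>z\<in>C - {y}. g z)" by (simp add: algebra_simps)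
    qed simp
    finally show "(\<Sum>y\<in>C. g y)\<^sup>2 = (\<Sum>y\<in>C. g y * g y + g y * (\<Sum>z\<in>C - {y}. g z))" .
  qed simp
  also have "\<dots> = (\<Sum>C\<in>\<C>. \<Sum>y\<in>{y. y \<in> V \<and> y \<in> C}. g y * g y + g y * (\<Sum>z\<in>C - {y}. g z))"
  proof (rule sum.cong)
    fix C assume "C \<in> \<C>"
    then have "{y. y \<in> V \<and> y \<in> C} = C" using clV by blast
    then show "(\<Sum>y\<in>C. g y * g y + g y * (\<Sum>z\<in>C - {y}. g z)) =
      (\<Sum>y\<in>{y. y \<in> V \<and> y \<in> C}. g y * g y + g y * (\<Sum>z\<in>C - {y}. g z))" by simp
  qed simp
  also have "\<dots> = (\<Sum>y\<in>V. \<Sum>C\<in>{C. C \<in> \<C> \<and> y \<in> C}. g y * g y + g y * (\<Sum>z\<in>C - {y}. g z))"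
    by (rule sum.swap_restrict[OF finCC finV])
  also have "\<dots> = (\<Sum>y\<in>V. (0::real))"
  proof (rule sum.cong)
    fix y assume y: "y \<in> V"
    have "(\<Sum>C\<in>{C. C \<in> \<C> \<and> y \<in> C}. g y * g y + g y * (\<Sum>z\<in>C - {y}. g z))
        = real (card {C \<in> \<C>. y \<in> C}) * (g y * g y) + g y * (\<Sum>C\<in>{C \<in> \<C>. y \<in> C}. \<Sum>z\<in>C - {y}. g z)"
      by (simp add: sum.distrib sum_distrib_left)
    also have "\<dots> = Q D * (g y * g y) + g y * (- Q D * g y)" using mcount[OF y] Nsplit[OF y, of g] eg[OF y] by simp
    also have "\<dots> = 0" by (simp add: algebra_simps)
    finally show "(\<Sum>C\<in>{C. C \<in> \<C> \<and> y \<in> C}. g y * g y + g y * (\<Sum>z\<in>C - {y}. g z)) = 0" .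
  qed simp
  finally have "(\<Sum>C\<in>\<C>. (\<Sum>y\<in>C. g y)\<^sup>2) = 0" by simp
  then have "\<forall>C\<in>\<C>. (\<Sum>y\<in>C. g y)\<^sup>2 = 0"
    using sum_nonneg_eq_0_iff[OF finCC, of "\<lambda>C. (\<Sum>y\<in>C. g y)\<^sup>2"] by simp
  then show ?thesis using C0 g_def by simp
qed

lemma set_dist_eq: "C \<in> \<C> \<Longrightarrow> z \<in> C \<Longrightarrow> d x z = t \<Longrightarrow> (\<forall>w\<in>C. t \<le> d x w) \<Longrightarrow> set_dist V E x C = t"
proof -
  assume a: "C \<in> \<C>" "z \<in> C" "d x z = t" "\<forall>w\<in>C. t \<le> d x w"
  have "finite (d x ` C)" using finC[OF a(1)] by simp
  moreover have "\<And>s. s \<in> d x ` C \<Longrightarrow> t \<le> s" using a(4) by blast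
  moreover have "t \<in> d x ` C" using a(2,3) by blast
  ultimately show ?thesis unfolding set_dist_def by (rule Min_eqI)
qed

lemma set_dist_props: "C \<in> \<C> \<Longrightarrow> set_dist V E x C = j \<Longrightarrow> (\<exists>y0\<in>C. d x y0 = j) \<and> (\<forall>w\<in>C. j \<le> d x w)"
proof -
  assume C: "C \<in> \<C>" and s: "set_dist V E x C = j"
  have f: "finite (d x ` C)" "d x ` C \<noteq> {}" using finC[OF C] Cne[OF C] by auto
  have "j \<in> d x ` C" using Min_in[OF f] s unfolding set_dist_def by simp
  moreover have "\<forall>w\<in>C. j \<le> d x w" using Min_le[OF f(1)] s unfolding set_dist_def by simp
  ultimately show ?thesis by auto
qed

lemma claim1: "x \<in> V \<Longrightarrow> C \<in> \<C> \<Longrightarrow> set_dist V E x C = j \<Longrightarrow> j < D \<Longrightarrow>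
   real (card {y \<in> C. d x y = j}) = 1 + \<alpha> * Q j"
proof -
  assume x: "x \<in> V" and C: "C \<in> \<C>" and s: "set_dist V E x C = j" and j: "j < D"
  obtain y0 where y0: "y0 \<in> C" "d x y0 = j" and ge: "\<forall>w\<in>C. j \<le> d x w" using set_dist_props[OF C s] by blast
  have two: "d x w = j \<or> d x w = j + 1" if w: "w \<in> C" for w
  proof (cases "w = y0")
    case True then show ?thesis using y0 by simp
  next
    case False
    then have "E y0 w" using clE[OF C y0(1) w] by blast
    then have "d x w \<le> d x y0 + 1" using d_tri[OF x] by blast
    moreover have "j \<le> d x w" using ge w by blast
    ultimately show ?thesis using y0(2) by arith
  qed
  define n where "n = real (card {y \<in> C. d x y = j})"
  have "(\<Sum>y\<in>C. u (d x y)) = (\<Sum>y\<in>C. u (j + 1) + (if d x y = j then u j - u (j + 1) else 0))"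
  proof (rule sum.cong)
    fix w assume "w \<in> C"
    then show "u (d x w) = u (j + 1) + (if d x w = j then u j - u (j + 1) else 0)"
      using two[of w] by auto
  qed simp
  also have "\<dots> = real (card C) * u (j + 1) + n * (u j - u (j + 1))"
    unfolding sum.distrib n_def using finC[OF C] by (simp add: sum.inter_filter[symmetric])
  finally have "real (card C) * u (j + 1) + n * (u j - u (j + 1)) = 0" using delsarte[OF x C] by simp
  moreover have cC: "real (card C) = 1 + \<beta>" using clcard[OF C] .
  moreover have uS: "u (j + 1) = rho j * u j" by simp
  ultimately have "((1 + \<beta>) * rho j + n * (1 - rho j)) * u j = 0" by algebra
  then have e: "(1 + \<beta>) * rho j + n * (1 - rho j) = 0" using u_nz[of j] j by simp
  have bp: "\<beta> - \<alpha> * Q j > 0" using b_pos[OF j] .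
  have "(1 + \<beta>) * (- (1 + \<alpha> * Q j)) + n * ((\<beta> - \<alpha> * Q j) + (1 + \<alpha> * Q j)) = 0"
  proof -
    have "((1 + \<beta>) * rho j + n * (1 - rho j)) * (\<beta> - \<alpha> * Q j) = 0" using e by simp
    moreover have "rho j * (\<beta> - \<alpha> * Q j) = - (1 + \<alpha> * Q j)" unfolding rho_def using bp by simp
    ultimately show ?thesis by algebra
  qed
  then have "(1 + \<beta>) * (n - (1 + \<alpha> * Q j)) = 0" by algebra
  then show ?thesis using beta_pos n_def by simp
qed

lemma claim2: "x \<in> V \<Longrightarrow> y \<in> V \<Longrightarrow> d x y = j \<Longrightarrow> 1 \<le> j \<Longrightarrow> j \<le> D \<Longrightarrow>
   real (card {C \<in> \<C>. x \<in> C \<and> set_dist V E y C = j - 1}) = Q j"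
proof -
  assume x: "x \<in> V" and y: "y \<in> V" and dj: "d x y = j" and j1: "1 \<le> j" and jD: "j \<le> D"
  define T where "T = {C \<in> \<C>. x \<in> C \<and> set_dist V E y C = j - 1}"
  define Z where "Z = {z \<in> V. E x z \<and> d y z + 1 = d y x}"
  have dyx: "d y x = j" using d_sym x y dj by simp
  have cZ: "real (card Z) = Cf j" using bc[OF y x] dyx unfolding cnum_def Z_def by simp
  have UZ: "Z = (\<Union>C\<in>T. {z \<in> C. d y z = j - 1})"
  proof
    show "Z \<subseteq> (\<Union>C\<in>T. {z \<in> C. d y z = j - 1})"
    proof
      fix z assume z: "z \<in> Z"
      then have ez: "E x z" "d y z = j - 1" using dyx j1 by (auto simp: Z_def)
      then obtain C where C: "C \<in> \<C>" "x \<in> C" "z \<in> C" using uniq by blast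
      have "\<forall>w\<in>C. j - 1 \<le> d y w"
      proof
        fix w assume w: "w \<in> C"
        show "j - 1 \<le> d y w"
        proof (cases "w = x")
          case True then show ?thesis using dyx by simp
        next
          case False
          then have "E x w" using clE[OF C(1) C(2) w] by blast
          then show ?thesis using d_tri2[OF y] dyx by fastforce
        qed
      qed
      then have "set_dist V E y C = j - 1" using set_dist_eq[OF C(1) C(3) ez(2)] by blast
      then show "z \<in> (\<Union>C\<in>T. {z \<in> C. d y z = j - 1})" using C ez unfolding T_def by blast
    qed
  next
    show "(\<Union>C\<in>T. {z \<in> C. d y z = j - 1}) \<subseteq> Z"
    proof
      fix z assume "z \<in> (\<Union>C\<in>T. {z \<in> C. d y z = j - 1})"
      then obtain C where C: "C \<in> \<C>" "x \<in> C" "z \<in> C" "d y z = j - 1" unfolding T_def by blast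
      have "z \<noteq> x" using C(4) dyx j1 by auto
      then have "E x z" using clE[OF C(1) C(2) C(3)] by blast
      then show "z \<in> Z" unfolding Z_def using C(4) dyx j1 EV by auto
    qed
  qed
  have finT: "finite T" using finCC unfolding T_def by simp
  have "card Z = (\<Sum>C\<in>T. card {z \<in> C. d y z = j - 1})"
    unfolding UZ
  proof (rule card_UN_disjoint[OF finT])
    show "\<forall>C\<in>T. finite {z \<in> C. d y z = j - 1}" using finC unfolding T_def by simp
    show "\<forall>C1\<in>T. \<forall>C2\<in>T. C1 \<noteq> C2 \<longrightarrow> {z \<in> C1. d y z = j - 1} \<inter> {z \<in> C2. d y z = j - 1} = {}"
    proof (intro ballI impI)
      fix C1 C2 assume a: "C1 \<in> T" "C2 \<in> T" "C1 \<noteq> C2"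
      show "{z \<in> C1. d y z = j - 1} \<inter> {z \<in> C2. d y z = j - 1} = {}"
      proof (rule ccontr)
        assume "{z \<in> C1. d y z = j - 1} \<inter> {z \<in> C2. d y z = j - 1} \<noteq> {}"
        then obtain z where z: "z \<in> C1" "z \<in> C2" "d y z = j - 1" by blast
        have "z \<noteq> x" using z(3) dyx j1 by auto
        moreover have "C1 \<in> \<C>" "x \<in> C1" using a unfolding T_def by auto
        ultimately have "E x z" using clE[of C1 x z] z by blast
        then show False using uniq[of x z] a z unfolding T_def by blast
      qed
    qed
  qed
  then have "real (card Z) = (\<Sum>C\<in>T. real (card {z \<in> C. d y z = j - 1}))" by simp
  also have "\<dots> = (\<Sum>C\<in>T. 1 + \<alpha> * Q (j - 1))"
  proof (rule sum.cong)
    fix C assume "C \<in> T"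
    then show "real (card {z \<in> C. d y z = j - 1}) = 1 + \<alpha> * Q (j - 1)"
      using claim1[OF y, of C "j - 1"] jD j1 unfolding T_def by simp
  qed simp
  also have "\<dots> = real (card T) * (1 + \<alpha> * Q (j - 1))" by simp
  finally have e: "real (card Z) = real (card T) * (1 + \<alpha> * Q (j - 1))" .
  have "real (card Z) = Q j * (1 + \<alpha> * Q (j - 1))" using cZ unfolding Cf_def .
  with e have "real (card T) * (1 + \<alpha> * Q (j - 1)) = Q j * (1 + \<alpha> * Q (j - 1))" by linarith
  moreover have "j - 1 < D" using j1 jD by simp
  then have "1 + \<alpha> * Q (j - 1) > 0" by (rule c_pos)
  then have "1 + \<alpha> * Q (j - 1) \<noteq> 0" by simp
  ultimately have "real (card T) = Q j" by (metis mult_right_cancel)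
  then show ?thesis unfolding T_def .
qed

end

theorem lemma16:
  fixes V :: "'a set" and E :: "'a \<Rightarrow> 'a \<Rightarrow> bool" and \<C> :: "'a set set"
    and D :: nat and b :: int and \<alpha> \<beta> :: real
  assumes "classical_parameters V E D b \<alpha> \<beta>"
    and "b \<ge> 2" and "D \<ge> 3"
    and "geometric_wrt V E \<C>"
  shows "(\<forall>j < D. \<forall>C\<in>\<C>. \<forall>x\<in>V. set_dist V E x C = j \<longrightarrow>
            real (card {y \<in> C. gdist V E x y = j}) = 1 + \<alpha> * qbr b j)
       \<and> (\<forall>j \<in> {1..D}. \<forall>x\<in>V. \<forall>y\<in>V. gdist V E x y = j \<longrightarrow>
            real (card {C \<in> \<C>. x \<in> C \<and> set_dist V E y C = j - 1}) = qbr b j)"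
proof -
  interpret geo V E D b \<alpha> \<beta> \<C>
    using assms by (unfold_locales) auto
  show ?thesis
  proof (intro conjI allI impI ballI)
    fix j C x assume a: "j < D" "C \<in> \<C>" "x \<in> V" "set_dist V E x C = j"
    show "real (card {y \<in> C. gdist V E x y = j}) = 1 + \<alpha> * qbr b j"
      using claim1[OF a(3) a(2) a(4) a(1)] unfolding Q_def .
  next
    fix j x y assume a: "j \<in> {1..D}" "x \<in> V" "y \<in> V" "gdist V E x y = j"
    then have "1 \<le> j" "j \<le> D" by auto
    then show "real (card {C \<in> \<C>. x \<in> C \<and> set_dist V E y C = j - 1}) = qbr b j"
      using claim2[OF a(2) a(3) a(4)] unfolding Q_def by blast
  qed
qed

end
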